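(* Let $G$ be a digraph with a fixed upward planar drawing and let $\mathcal{P}$ be a set of pairwise vertex disjoint directed paths in $G$. Then (1) the relation $\prec_{\mathcal{P}}$ is irreflexive, and (2) $\prec_{\mathcal{P}}$ is anti-symmetric, i.e. if $P_1\prec_{\mathcal{P}}P_2$ then $P_2\not\prec_{\mathcal{P}}P_1$ for any $P_1,P_2\in\mathcal{P}$.
   Context: An upward planar drawing of a digraph is a plane drawing (no edge crossings) in which every directed edge is a curve monotone increasing in the $y$-direction from tail to head. A path is identified with the set of points of $\mathbb{R}^2$ in its drawing. For a path $P$ with endpoints $(x,y)$, $(x',y')$, $y\le y'$, let $\mathrm{Right}(P):=\{(u,v)\in\mathbb{R}^2: y\le v\le y',\ u'<u \text{ for all } u' \text{ with } (u',v)\in P\}$ and $\mathrm{Left}(P):=\{(u,v)\in\mathbb{R}^2: y\le v\le y',\ u'>u \text{ for all } u' \text{ with } (u',v)\in P\}$. A point $p\notin P$ is to the right of $P$ if $p\in\mathrm{Right}(P)$ and to the left of $P$ if $p\in\mathrm{Left}(P)$. For vertex disjoint paths $P,Q$, write $Q\prec P$ ($P$ is to the right of $Q$) if some point of $P$ is to the right of $Q$. $\prec_{\mathcal{P}}$ denotes the restriction of $\prec$ to the paths in $\mathcal{P}$. *)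

theory Defs
  imports "HOL-Analysis.Analysis"
begin

type_synonym point = "real \<times> real"

definition upward_planar_drawing ::
  "'v set \<Rightarrow> ('v \<times> 'v) set \<Rightarrow> ('v \<Rightarrow> point) \<Rightarrow> ('v \<times> 'v \<Rightarrow> real \<Rightarrow> point) \<Rightarrow> bool" where
  "upward_planar_drawing V E pos gam \<longleftrightarrow>
     E \<subseteq> V \<times> V \<and>
     inj_on pos V \<and>
     (\<forall>e\<in>E. continuous_on {0..1} (gam e) \<and>
             gam e 0 = pos (fst e) \<and> gam e 1 = pos (snd e) \<and>
             (\<forall>s\<in>{0..1}. \<forall>t\<in>{0..1}. s < t \<longrightarrow> snd (gam e s) < snd (gam e t)) \<and>
             (\<forall>w\<in>V. \<forall>t\<in>{0<..<1}. gam e t \<noteq> pos w)) \<and>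
     (\<forall>e\<in>E. \<forall>e'\<in>E. e \<noteq> e' \<longrightarrow> gam e ` {0..1} \<inter> gam e' ` {0..1} \<subseteq> pos ` V)"

definition dpath :: "'v set \<Rightarrow> ('v \<times> 'v) set \<Rightarrow> 'v list \<Rightarrow> bool" where
  "dpath V E vs \<longleftrightarrow> vs \<noteq> [] \<and> distinct vs \<and> set vs \<subseteq> V \<and>
     (\<forall>i. Suc i < length vs \<longrightarrow> (vs ! i, vs ! Suc i) \<in> E)"

definition path_points :: "('v \<Rightarrow> point) \<Rightarrow> ('v \<times> 'v \<Rightarrow> real \<Rightarrow> point) \<Rightarrow> 'v list \<Rightarrow> point set" where
  "path_points pos gam vs = pos ` set vs \<union>
     (\<Union>i\<in>{i. Suc i < length vs}. gam (vs ! i, vs ! Suc i) ` {0..1})"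

text \<open>Right(P): endpoints of P are the positions of its first and last vertex
  (the first one is the lower one in an upward drawing).\<close>
definition Right_of :: "('v \<Rightarrow> point) \<Rightarrow> ('v \<times> 'v \<Rightarrow> real \<Rightarrow> point) \<Rightarrow> 'v list \<Rightarrow> point set" where
  "Right_of pos gam vs = {(u, v). snd (pos (hd vs)) \<le> v \<and> v \<le> snd (pos (last vs)) \<and>
      (\<forall>u'. (u', v) \<in> path_points pos gam vs \<longrightarrow> u' < u)}"

definition Left_of :: "('v \<Rightarrow> point) \<Rightarrow> ('v \<times> 'v \<Rightarrow> real \<Rightarrow> point) \<Rightarrow> 'v list \<Rightarrow> point set" where
  "Left_of pos gam vs = {(u, v). snd (pos (hd vs)) \<le> v \<and> v \<le> snd (pos (last vs)) \<and>
      (\<forall>u'. (u', v) \<in> path_points pos gam vs \<longrightarrow> u' > u)}"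

text \<open>right_prec pos gam Q P: Q \<prec> P, i.e. P and Q are vertex disjoint and some point of P
  (not on Q) lies to the right of Q.\<close>
definition right_prec :: "('v \<Rightarrow> point) \<Rightarrow> ('v \<times> 'v \<Rightarrow> real \<Rightarrow> point) \<Rightarrow> 'v list \<Rightarrow> 'v list \<Rightarrow> bool" where
  "right_prec pos gam Q P \<longleftrightarrow> set P \<inter> set Q = {} \<and>
     (\<exists>p\<in>path_points pos gam P. p \<notin> path_points pos gam Q \<and> p \<in> Right_of pos gam Q)"

end

theory Submission
  imports Defs
begin

definition HG :: "(real \<times> real) set \<Rightarrow> real \<Rightarrow> real \<Rightarrow> (real \<Rightarrow> real) \<Rightarrow> bool" where
  "HG S lo hi X \<longleftrightarrow> lo \<le> hi \<and> continuous_on {lo..hi} X \<and> S = (\<lambda>h. (X h, h)) ` {lo..hi}"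

lemma HG_unique: "HG S lo hi X \<Longrightarrow> (x,h) \<in> S \<Longrightarrow> x = X h \<and> lo \<le> h \<and> h \<le> hi"
  unfolding HG_def by auto

lemma HG_meet:
  assumes P: "HG SP lp hp XP" and Q: "HG SQ lq hq XQ"
    and p: "(pu,pv) \<in> SP" "lq \<le> pv" "pv \<le> hq" "\<forall>u'. (u',pv) \<in> SQ \<longrightarrow> u' < pu"
    and q: "(qu,qv) \<in> SQ" "lp \<le> qv" "qv \<le> hp" "\<forall>u'. (u',qv) \<in> SP \<longrightarrow> u' < qu"
  shows "SP \<inter> SQ \<noteq> {}"
proof -
  from HG_unique[OF P p(1)] have pu: "pu = XP pv" and pv: "lp \<le> pv" "pv \<le> hp" by auto
  from HG_unique[OF Q q(1)] have qu: "qu = XQ qv" and qv: "lq \<le> qv" "qv \<le> hq" by auto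
  have inQ: "(XQ h, h) \<in> SQ" if "lq \<le> h" "h \<le> hq" for h using Q that unfolding HG_def by auto
  have inP: "(XP h, h) \<in> SP" if "lp \<le> h" "h \<le> hp" for h using P that unfolding HG_def by auto
  have 1: "XQ pv < XP pv" using p(4) inQ[OF p(2,3)] pu by auto
  have 2: "XP qv < XQ qv" using q(4) inP[OF q(2,3)] qu by auto
  let ?f = "\<lambda>h. XP h - XQ h"
  have seg: "closed_segment pv qv \<subseteq> {lp..hp} \<inter> {lq..hq}"
  proof -
    have cs: "closed_segment pv qv = {min pv qv..max pv qv}"
      by (simp add: closed_segment_eq_real_ivl min_def max_def)
    have "lp \<le> min pv qv" "max pv qv \<le> hp" "lq \<le> min pv qv" "max pv qv \<le> hq"
      using pv qv p(2,3) q(2,3) by linarith+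
    thus ?thesis unfolding cs by auto
  qed
  have cP: "continuous_on (closed_segment pv qv) XP"
    using P seg unfolding HG_def by (meson continuous_on_subset le_inf_iff)
  have cQ: "continuous_on (closed_segment pv qv) XQ"
    using Q seg unfolding HG_def by (meson continuous_on_subset le_inf_iff)
  have cf: "continuous_on (closed_segment pv qv) ?f"
    using cP cQ by (rule continuous_on_diff)
  have z: "0 \<in> closed_segment (?f pv) (?f qv)"
  proof -
    have "0 \<in> closed_segment a b" if "b < 0" "0 < a" for a b :: real
      using that unfolding closed_segment_eq_real_ivl by auto
    thus ?thesis using 1 2 by simp
  qed
  obtain c where c: "c \<in> closed_segment pv qv" "?f c = 0"
    using IVT'_closed_segment_real[OF z cf] by (elim bexE)
  have cin: "lp \<le> c" "c \<le> hp" "lq \<le> c" "c \<le> hq" using c(1) seg by auto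
  have "(XP c, c) \<in> SP" using inP cin by blast
  moreover have "(XP c, c) \<in> SQ" using inQ cin c(2) by (metis eq_iff_diff_eq_0)
  ultimately show ?thesis by blast
qed

lemma HG_param:
  fixes g :: "real \<Rightarrow> real \<times> real"
  assumes c: "continuous_on {0..1} g"
    and m: "\<forall>s\<in>{0..1}. \<forall>t\<in>{0..1}. s < t \<longrightarrow> snd (g s) < snd (g t)"
  shows "\<exists>X. HG (g ` {0..1}) (snd (g 0)) (snd (g 1)) X"
proof -
  define \<phi> where "\<phi> = snd \<circ> g"
  have cphi: "continuous_on {0..1} \<phi>" unfolding \<phi>_def by (intro continuous_intros c)
  have mono: "\<phi> s \<le> \<phi> t" if "s \<in> {0..1}" "t \<in> {0..1}" "s \<le> t" for s t
    using m that unfolding \<phi>_def by (cases "s = t") (auto simp: less_imp_le)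
  have inj: "inj_on \<phi> {0..1}"
    unfolding inj_on_def \<phi>_def using m by (metis linorder_neqE_linordered_idom less_irrefl comp_apply)
  have img: "\<phi> ` {0..1} = {\<phi> 0..\<phi> 1}"
  proof
    show "\<phi> ` {0..1} \<subseteq> {\<phi> 0..\<phi> 1}" using mono by auto
    show "{\<phi> 0..\<phi> 1} \<subseteq> \<phi> ` {0..1}"
    proof
      fix y assume "y \<in> {\<phi> 0..\<phi> 1}"
      then obtain x where "0 \<le> x" "x \<le> 1" "\<phi> x = y"
        using IVT'[of \<phi> 0 y 1] cphi by auto
      thus "y \<in> \<phi> ` {0..1}" by force
    qed
  qed
  define \<psi> where "\<psi> = inv_into {0..1} \<phi>"
  have psi: "\<forall>x\<in>{0..1}. \<psi> (\<phi> x) = x" unfolding \<psi>_def using inj by auto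
  have cpsi: "continuous_on {\<phi> 0..\<phi> 1} \<psi>"
    using continuous_on_inv[OF cphi compact_Icc psi] img by simp
  have psi_in: "\<psi> h \<in> {0..1}" if "h \<in> {\<phi> 0..\<phi> 1}" for h
    using that img unfolding \<psi>_def by (metis inv_into_into)
  have phipsi: "\<phi> (\<psi> h) = h" if "h \<in> {\<phi> 0..\<phi> 1}" for h
    using that img unfolding \<psi>_def by (metis f_inv_into_f)
  define X where "X = fst \<circ> g \<circ> \<psi>"
  have cX: "continuous_on {\<phi> 0..\<phi> 1} X" unfolding X_def
    by (intro continuous_on_compose cpsi continuous_intros continuous_on_subset[OF c]) (use psi_in in auto)
  have "g ` {0..1} = (\<lambda>h. (X h, h)) ` {\<phi> 0..\<phi> 1}"
  proof
    show "g ` {0..1} \<subseteq> (\<lambda>h. (X h, h)) ` {\<phi> 0..\<phi> 1}"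
    proof
      fix p assume "p \<in> g ` {0..1}"
      then obtain t where t: "t \<in> {0..1}" "p = g t" by auto
      hence "p = (X (\<phi> t), \<phi> t)" unfolding X_def using psi by (simp add: \<phi>_def prod_eq_iff)
      thus "p \<in> (\<lambda>h. (X h, h)) ` {\<phi> 0..\<phi> 1}" using img t by auto
    qed
    show "(\<lambda>h. (X h, h)) ` {\<phi> 0..\<phi> 1} \<subseteq> g ` {0..1}"
    proof
      fix p assume "p \<in> (\<lambda>h. (X h, h)) ` {\<phi> 0..\<phi> 1}"
      then obtain h where h: "h \<in> {\<phi> 0..\<phi> 1}" "p = (X h, h)" by auto
      have "p = g (\<psi> h)" using h phipsi[OF h(1)] unfolding X_def by (simp add: \<phi>_def prod_eq_iff)
      thus "p \<in> g ` {0..1}" using psi_in[OF h(1)] by auto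
    qed
  qed
  moreover have "\<phi> 0 \<le> \<phi> 1" using mono by auto
  ultimately show ?thesis unfolding HG_def using cX by (auto simp: \<phi>_def)
qed

lemma HG_glue:
  assumes 1: "HG S1 a b X1" and 2: "HG S2 b c X2" and e: "X1 b = X2 b"
  shows "HG (S1 \<union> S2) a c (\<lambda>h. if h \<le> b then X1 h else X2 h)"
proof -
  have ab: "a \<le> b" "b \<le> c" using 1 2 unfolding HG_def by auto
  have c1: "continuous_on {a..b} X1" using 1 unfolding HG_def by blast
  have c2: "continuous_on {b..c} X2" using 2 unfolding HG_def by blast
  have abc: "{a..b} \<union> {b..c} = {a..c}" using ab by auto
  have "continuous_on ({a..b} \<union> {b..c}) (\<lambda>h. if h \<le> b then X1 h else X2 h)"
  proof (rule continuous_on_closed_Un)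
    show "continuous_on {a..b} (\<lambda>h. if h \<le> b then X1 h else X2 h)"
      by (rule continuous_on_eq[OF c1]) simp
    show "continuous_on {b..c} (\<lambda>h. if h \<le> b then X1 h else X2 h)"
      by (rule continuous_on_eq[OF c2]) (use e in auto)
  qed (rule closed_atLeastAtMost)+
  hence cont: "continuous_on {a..c} (\<lambda>h. if h \<le> b then X1 h else X2 h)" unfolding abc .
  have s: "S1 = (\<lambda>h. (X1 h, h)) ` {a..b}" "S2 = (\<lambda>h. (X2 h, h)) ` {b..c}"
    using 1 2 unfolding HG_def by blast+
  have i1: "(\<lambda>h. (X1 h, h)) ` {a..b} = (\<lambda>h. (if h \<le> b then X1 h else X2 h, h)) ` {a..b}"
    by (rule image_cong) auto
  have i2: "(\<lambda>h. (X2 h, h)) ` {b..c} = (\<lambda>h. (if h \<le> b then X1 h else X2 h, h)) ` {b..c}"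
    using e by (intro image_cong) auto
  have img: "S1 \<union> S2 = (\<lambda>h. (if h \<le> b then X1 h else X2 h, h)) ` {a..c}"
    unfolding s i1 i2 image_Un[symmetric] abc ..
  have "a \<le> c" using ab by simp
  thus ?thesis unfolding HG_def using cont img by blast
qed

lemma path_points_single: "path_points pos gam [a] = {pos a}"
  unfolding path_points_def by auto

lemma path_points_Cons2:
  assumes "gam (a,b) 0 = pos a"
  shows "path_points pos gam (a#b#rest) = gam (a,b) ` {0..1} \<union> path_points pos gam (b#rest)"
proof -
  have I: "{i. Suc i < length (a#b#rest)} = insert 0 (Suc ` {j. Suc j < length (b#rest)})"
    by (auto simp: image_iff) (metis Suc_less_eq less_Suc_eq_0_disj not0_implies_Suc)
  have "(\<Union>i\<in>{i. Suc i < length (a#b#rest)}. gam ((a#b#rest) ! i, (a#b#rest) ! Suc i) ` {0..1})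
     = gam (a,b) ` {0..1} \<union> (\<Union>j\<in>{j. Suc j < length (b#rest)}. gam ((b#rest) ! j, (b#rest) ! Suc j) ` {0..1})"
    unfolding I by simp
  moreover have "pos a \<in> gam (a,b) ` {0..1}" using assms by (metis atLeastAtMost_iff image_eqI order_refl zero_le_one)
  ultimately show ?thesis unfolding path_points_def by auto
qed

lemma dpath_tl: "dpath V E (a#b#rest) \<Longrightarrow> dpath V E (b#rest) \<and> (a,b) \<in> E"
proof -
  assume d: "dpath V E (a#b#rest)"
  have "\<forall>i. Suc i < length (b#rest) \<longrightarrow> ((b#rest) ! i, (b#rest) ! Suc i) \<in> E"
  proof (intro allI impI)
    fix i assume "Suc i < length (b#rest)"
    hence "Suc (Suc i) < length (a#b#rest)" by simp
    thus "((b#rest) ! i, (b#rest) ! Suc i) \<in> E" using d unfolding dpath_def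
      by (metis nth_Cons_Suc)
  qed
  moreover have "(a,b) \<in> E" using d unfolding dpath_def by (metis length_Cons nth_Cons_0 nth_Cons_Suc zero_less_Suc Suc_less_eq)
  ultimately show ?thesis using d unfolding dpath_def by auto
qed

lemma path_HG:
  assumes D: "upward_planar_drawing V E pos gam"
  shows "dpath V E vs \<Longrightarrow> \<exists>X. HG (path_points pos gam vs) (snd (pos (hd vs))) (snd (pos (last vs))) X"
proof (induction vs rule: induct_list012)
  case 1 thus ?case by (simp add: dpath_def)
next
  case (2 x)
  have "HG {pos x} (snd (pos x)) (snd (pos x)) (\<lambda>_. fst (pos x))"
    unfolding HG_def by auto
  thus ?case by (auto simp: path_points_single)
next
  case (3 a b rest)
  from dpath_tl[OF 3(3)] have d: "dpath V E (b#rest)" and e: "(a,b) \<in> E" by auto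
  from 3(2)[OF d] obtain X2 where X2: "HG (path_points pos gam (b#rest)) (snd (pos b)) (snd (pos (last (b#rest)))) X2" by auto
  have g: "continuous_on {0..1} (gam (a,b))" "gam (a,b) 0 = pos a" "gam (a,b) 1 = pos b"
    "\<forall>s\<in>{0..1}. \<forall>t\<in>{0..1}. s < t \<longrightarrow> snd (gam (a,b) s) < snd (gam (a,b) t)"
    using D e unfolding upward_planar_drawing_def by auto
  from HG_param[OF g(1) g(4)] g obtain X1 where X1: "HG (gam (a,b) ` {0..1}) (snd (pos a)) (snd (pos b)) X1" by auto
  have "pos b \<in> gam (a,b) ` {0..1}" using g(3) by (metis atLeastAtMost_iff image_eqI order_refl zero_le_one)
  hence e1: "fst (pos b) = X1 (snd (pos b))" using HG_unique[OF X1, of "fst (pos b)"] by auto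
  have "pos b \<in> path_points pos gam (b#rest)" unfolding path_points_def by auto
  hence e2: "fst (pos b) = X2 (snd (pos b))" using HG_unique[OF X2, of "fst (pos b)"] by auto
  from HG_glue[OF X1 X2] e1 e2 have "\<exists>X. HG (gam (a,b) ` {0..1} \<union> path_points pos gam (b#rest)) (snd (pos a)) (snd (pos (last (b#rest)))) X" by metis
  thus ?case by (simp add: path_points_Cons2[of gam a b pos rest, OF g(2)])
qed

lemma edge_vertex:
  assumes D: "upward_planar_drawing V E pos gam" and e: "e \<in> E"
    and x: "x \<in> gam e ` {0..1}" "x \<in> pos ` V"
  shows "x = pos (fst e) \<or> x = pos (snd e)"
proof -
  obtain t where t: "t \<in> {0..1}" "x = gam e t" using x by auto
  obtain w where w: "w \<in> V" "x = pos w" using x by auto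
  have "\<forall>w\<in>V. \<forall>t\<in>{0<..<1}. gam e t \<noteq> pos w" "gam e 0 = pos (fst e)" "gam e 1 = pos (snd e)"
    using D e unfolding upward_planar_drawing_def by auto
  moreover have "t = 0 \<or> t = 1 \<or> t \<in> {0<..<1}" using t by auto
  ultimately show ?thesis using t w by metis
qed

lemma path_pt_vertex:
  assumes D: "upward_planar_drawing V E pos gam" and P: "dpath V E P"
    and x: "x \<in> path_points pos gam P" "x \<in> pos ` V"
  shows "\<exists>w\<in>set P. x = pos w"
proof (cases "x \<in> pos ` set P")
  case True thus ?thesis by auto
next
  case False
  then obtain i where i: "Suc i < length P" "x \<in> gam (P ! i, P ! Suc i) ` {0..1}"
    using x unfolding path_points_def by auto
  have "(P ! i, P ! Suc i) \<in> E" using P i unfolding dpath_def by auto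
  from edge_vertex[OF D this i(2) x(2)] have "x = pos (P ! i) \<or> x = pos (P ! Suc i)" by simp
  moreover have "P ! i \<in> set P" "P ! Suc i \<in> set P" using i by auto
  ultimately show ?thesis by auto
qed

lemma no_common:
  assumes D: "upward_planar_drawing V E pos gam" and P1: "dpath V E P1" and P2: "dpath V E P2"
    and dis: "set P1 \<inter> set P2 = {}"
    and x: "x \<in> path_points pos gam P1" "x \<in> path_points pos gam P2"
  shows False
proof -
  have sV: "set P1 \<subseteq> V" "set P2 \<subseteq> V" using P1 P2 unfolding dpath_def by auto
  have "x \<in> pos ` V"
  proof (cases "x \<in> pos ` set P1 \<or> x \<in> pos ` set P2")
    case True thus ?thesis using sV by auto
  next
    case False
    then obtain i j where i: "Suc i < length P1" "x \<in> gam (P1 ! i, P1 ! Suc i) ` {0..1}"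
      and j: "Suc j < length P2" "x \<in> gam (P2 ! j, P2 ! Suc j) ` {0..1}"
      using x unfolding path_points_def by auto
    have E: "(P1 ! i, P1 ! Suc i) \<in> E" "(P2 ! j, P2 ! Suc j) \<in> E"
      using P1 P2 i j unfolding dpath_def by auto
    have "P1 ! i \<in> set P1" "P2 ! j \<in> set P2" using i j by auto
    hence "(P1 ! i, P1 ! Suc i) \<noteq> (P2 ! j, P2 ! Suc j)" using dis by auto
    moreover have "\<forall>e\<in>E. \<forall>e'\<in>E. e \<noteq> e' \<longrightarrow> gam e ` {0..1} \<inter> gam e' ` {0..1} \<subseteq> pos ` V"
      using D unfolding upward_planar_drawing_def by blast
    ultimately have "gam (P1 ! i, P1 ! Suc i) ` {0..1} \<inter> gam (P2 ! j, P2 ! Suc j) ` {0..1} \<subseteq> pos ` V"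
      using E by blast
    thus ?thesis using i(2) j(2) by blast
  qed
  then obtain w1 w2 where w: "w1 \<in> set P1" "w2 \<in> set P2" "x = pos w1" "x = pos w2"
  proof -
    assume r: "\<And>w1 w2. w1 \<in> set P1 \<Longrightarrow> w2 \<in> set P2 \<Longrightarrow> x = pos w1 \<Longrightarrow> x = pos w2 \<Longrightarrow> thesis"
    assume xv: "x \<in> pos ` V"
    obtain w1 where "w1 \<in> set P1" "x = pos w1" using path_pt_vertex[OF D P1 x(1) xv] by blast
    moreover obtain w2 where "w2 \<in> set P2" "x = pos w2" using path_pt_vertex[OF D P2 x(2) xv] by blast
    ultimately show thesis using r by blast
  qed
  have "inj_on pos V" using D unfolding upward_planar_drawing_def by auto
  hence "w1 = w2" using w sV by (metis inj_onD subsetD)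
  thus False using w dis by auto
qed

theorem lemma7:
  fixes V :: "'v set" and E :: "('v \<times> 'v) set"
    and pos :: "'v \<Rightarrow> real \<times> real" and gam :: "'v \<times> 'v \<Rightarrow> real \<Rightarrow> real \<times> real"
    and \<P> :: "'v list set"
  assumes "finite V"
    and "upward_planar_drawing V E pos gam"
    and "\<forall>P\<in>\<P>. dpath V E P"
    and "\<forall>P\<in>\<P>. \<forall>Q\<in>\<P>. P \<noteq> Q \<longrightarrow> set P \<inter> set Q = {}"
  shows "(\<forall>P\<in>\<P>. \<not> right_prec pos gam P P) \<and>
         (\<forall>P1\<in>\<P>. \<forall>P2\<in>\<P>. right_prec pos gam P1 P2 \<longrightarrow> \<not> right_prec pos gam P2 P1)"
proof (intro conjI ballI impI notI)
  fix P assume "P \<in> \<P>" "right_prec pos gam P P"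
  thus False using assms(3) unfolding right_prec_def dpath_def by auto
next
  fix P1 P2 assume P: "P1 \<in> \<P>" "P2 \<in> \<P>" and r12: "right_prec pos gam P1 P2" and r21: "right_prec pos gam P2 P1"
  have d: "dpath V E P1" "dpath V E P2" using assms(3) P by auto
  have dis: "set P2 \<inter> set P1 = {}" using r12 unfolding right_prec_def by auto
  obtain X1 where X1: "HG (path_points pos gam P1) (snd (pos (hd P1))) (snd (pos (last P1))) X1"
    using path_HG[OF assms(2) d(1)] by auto
  obtain X2 where X2: "HG (path_points pos gam P2) (snd (pos (hd P2))) (snd (pos (last P2))) X2"
    using path_HG[OF assms(2) d(2)] by auto
  from r12 obtain pu pv where p: "(pu,pv) \<in> path_points pos gam P2" "(pu,pv) \<in> Right_of pos gam P1"
    unfolding right_prec_def by auto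
  from r21 obtain qu qv where q: "(qu,qv) \<in> path_points pos gam P1" "(qu,qv) \<in> Right_of pos gam P2"
    unfolding right_prec_def by auto
  have "path_points pos gam P2 \<inter> path_points pos gam P1 \<noteq> {}"
    by (rule HG_meet[OF X2 X1 p(1) _ _ _ q(1)]) (use p(2) q(2) in \<open>auto simp: Right_of_def\<close>)
  then obtain x where "x \<in> path_points pos gam P2" "x \<in> path_points pos gam P1" by auto
  thus False using no_common[OF assms(2) d(2) d(1) dis] by blast
qed

end
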